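(* Let $\mathcal X\subseteq\mathbb R^n$, $\bm c\in\mathbb R^n$, $\varepsilon\in(0,1)$, scenarios $\bm\xi^1,\dots,\bm\xi^N$ with probabilities $p_1,\dots,p_N\ge0$, $\sum_i p_i=1$, and $g(\bm x,\bm\xi)=\max_{j\in[J]}g_j(\bm x,\bm\xi)$. Consider the chance-constrained program $$v^*=\min_{\bm x\in\mathcal X}\Big\{\bm c^\top\bm x:\ \sum_{i=1}^N p_i\,\mathbb I[g(\bm x,\bm\xi^i)\le 0]\ge 1-\varepsilon\Big\},$$ let $\bm x^*$ be an optimal solution, and define $I^*=\{i\in[N]: g(\bm x^*,\bm\xi^i)<0\}$. Suppose $\sum_{i\in I^*}p_i>1-\varepsilon$. Then $v^*=v^{\mathrm{CVaR}}_S$, and there exist $\widehat{\bm\alpha}\ge\bm e$, $\widehat\beta\le 0$, $\widehat{\bm s}\ge\bm 0$ such that $v^{\mathrm{CVaR}}_S=v^{\mathrm{CVaR}}(\widehat{\bm\alpha})$ and $(\bm x^*,\widehat\beta,\widehat{\bm s},\widehat{\bm\alpha})$ is an optimal solution of the optimally scaled CVaR approximation $$v^{\mathrm{CVaR}}_S=\inf_{\bm x\in\mathcal X,\beta\le0,\bm s\ge\bm0,\bm\alpha\ge\bm e}\Big\{\bm c^\top\bm x:\ \varepsilon\beta+\sum_{i=1}^Np_is_i\le0,\ s_i+\beta\ge\alpha_ig(\bm x,\bm\xi^i),\ i\in[N]\Big\}.$$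
   Context: $\mathbb I[\cdot]$ is the indicator function, $\bm e$ the all-ones vector, $[N]=\{1,\dots,N\}$. For $\bm\alpha\ge\bm e$, $v^{\mathrm{CVaR}}(\bm\alpha)=\min_{\bm x\in\mathcal X,\beta\le0,\bm s\ge\bm0}\{\bm c^\top\bm x:\ \varepsilon\beta+\sum_i p_is_i\le0,\ s_i+\beta\ge\alpha_i g(\bm x,\bm\xi^i),\ i\in[N]\}$ (value $+\infty$ if infeasible), and $v^{\mathrm{CVaR}}_S=\inf_{\bm\alpha\ge\bm e}v^{\mathrm{CVaR}}(\bm\alpha)$. *)

theory Defs
  imports "HOL-Analysis.Analysis"
begin

definition gmax :: "nat \<Rightarrow> (nat \<Rightarrow> real^'n \<Rightarrow> 'b \<Rightarrow> real) \<Rightarrow> real^'n \<Rightarrow> 'b \<Rightarrow> real" where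
  "gmax J gj x xi = Max ((\<lambda>j. gj j x xi) ` {1..J})"

definition cc_feasible ::
  "(real^'n) set \<Rightarrow> real \<Rightarrow> nat \<Rightarrow> (nat \<Rightarrow> 'b) \<Rightarrow> (nat \<Rightarrow> real)
   \<Rightarrow> (real^'n \<Rightarrow> 'b \<Rightarrow> real) \<Rightarrow> real^'n \<Rightarrow> bool" where
  "cc_feasible X eps N xi p g x \<longleftrightarrow>
     x \<in> X \<and> (\<Sum>i=1..N. p i * (if g x (xi i) \<le> 0 then 1 else 0)) \<ge> 1 - eps"

definition cvar_feasible ::
  "(real^'n) set \<Rightarrow> real \<Rightarrow> nat \<Rightarrow> (nat \<Rightarrow> 'b) \<Rightarrow> (nat \<Rightarrow> real)
   \<Rightarrow> (real^'n \<Rightarrow> 'b \<Rightarrow> real) \<Rightarrow> (nat \<Rightarrow> real)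
   \<Rightarrow> real^'n \<Rightarrow> real \<Rightarrow> (nat \<Rightarrow> real) \<Rightarrow> bool" where
  "cvar_feasible X eps N xi p g alpha x beta s \<longleftrightarrow>
     x \<in> X \<and> beta \<le> 0 \<and> (\<forall>i\<in>{1..N}. s i \<ge> 0) \<and>
     eps * beta + (\<Sum>i=1..N. p i * s i) \<le> 0 \<and>
     (\<forall>i\<in>{1..N}. s i + beta \<ge> alpha i * g x (xi i))"

text \<open>v^CVaR(alpha): infimum (in extended reals; +infinity if infeasible).\<close>
definition v_cvar ::
  "(real^'n) set \<Rightarrow> real^'n \<Rightarrow> real \<Rightarrow> nat \<Rightarrow> (nat \<Rightarrow> 'b) \<Rightarrow> (nat \<Rightarrow> real)
   \<Rightarrow> (real^'n \<Rightarrow> 'b \<Rightarrow> real) \<Rightarrow> (nat \<Rightarrow> real) \<Rightarrow> ereal" where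
  "v_cvar X c eps N xi p g alpha =
     (INF (x, beta, s) \<in> {(x, beta, s). cvar_feasible X eps N xi p g alpha x beta s}.
        ereal (c \<bullet> x))"

definition alpha_ok :: "nat \<Rightarrow> (nat \<Rightarrow> real) \<Rightarrow> bool" where
  "alpha_ok N alpha \<longleftrightarrow> (\<forall>i\<in>{1..N}. alpha i \<ge> 1)"

definition v_cvar_S ::
  "(real^'n) set \<Rightarrow> real^'n \<Rightarrow> real \<Rightarrow> nat \<Rightarrow> (nat \<Rightarrow> 'b) \<Rightarrow> (nat \<Rightarrow> real)
   \<Rightarrow> (real^'n \<Rightarrow> 'b \<Rightarrow> real) \<Rightarrow> ereal" where
  "v_cvar_S X c eps N xi p g = (INF alpha \<in> {alpha. alpha_ok N alpha}. v_cvar X c eps N xi p g alpha)"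

end

theory Submission
  imports Defs
begin

lemma cvar_imp_cc:
  fixes g :: "real^'n \<Rightarrow> 'b \<Rightarrow> real"
  assumes F: "cvar_feasible X eps N xi p g alpha x beta s"
    and A: "alpha_ok N alpha" and eps: "0 < eps"
    and pn: "\<forall>i\<in>{1..N}. p i \<ge> 0" and ps: "(\<Sum>i=1..N. p i) = 1"
  shows "cc_feasible X eps N xi p g x"
proof -
  let ?V = "{i\<in>{1..N}. \<not> g x (xi i) \<le> 0}"
  have xX: "x \<in> X" and b: "beta \<le> 0" and s0: "\<forall>i\<in>{1..N}. s i \<ge> 0"
    and sumc: "eps * beta + (\<Sum>i=1..N. p i * s i) \<le> 0"
    and con: "\<forall>i\<in>{1..N}. s i + beta \<ge> alpha i * g x (xi i)"
    using F unfolding cvar_feasible_def by auto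
  have al: "\<forall>i\<in>{1..N}. alpha i \<ge> 1" using A unfolding alpha_ok_def by auto
  have sV: "s i > - beta" if "i \<in> ?V" for i
  proof -
    have "alpha i \<ge> 1" using that al by auto
    moreover have "g x (xi i) > 0" using that by auto
    ultimately have "alpha i * g x (xi i) > 0" by (simp add: mult_pos_pos)
    then show ?thesis using con that by force
  qed
  have split: "(\<Sum>i=1..N. p i * (if g x (xi i) \<le> 0 then 1 else 0)) = 1 - (\<Sum>i\<in>?V. p i)"
  proof -
    have "(\<Sum>i=1..N. p i * (if g x (xi i) \<le> 0 then 1 else 0)) = (\<Sum>i=1..N. p i) - (\<Sum>i=1..N. p i * (if g x (xi i) \<le> 0 then 0 else 1))"
      by (simp add: sum_subtractf[symmetric] algebra_simps if_distrib cong: if_cong)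
    also have "(\<Sum>i=1..N. p i * (if g x (xi i) \<le> 0 then 0 else 1)) = (\<Sum>i\<in>?V. p i)"
    proof -
      have "(\<Sum>i=1..N. p i * (if g x (xi i) \<le> 0 then 0 else 1)) = (\<Sum>i\<in>{1..N}. if \<not> g x (xi i) \<le> 0 then p i else 0)"
        by (intro sum.cong) auto
      also have "\<dots> = (\<Sum>i\<in>?V. p i)" by (simp only: sum.inter_filter[OF finite_atLeastAtMost])
      finally show ?thesis .
    qed
    finally show ?thesis using ps by simp
  qed
  have Vsub: "?V \<subseteq> {1..N}" by auto
  have le1: "(\<Sum>i\<in>?V. p i * s i) \<le> (\<Sum>i=1..N. p i * s i)"
    by (rule sum_mono2) (use pn s0 in auto)
  have "(\<Sum>i\<in>?V. p i) \<le> eps"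
  proof (cases "beta < 0")
    case True
    have "(\<Sum>i\<in>?V. p i) * (- beta) = (\<Sum>i\<in>?V. p i * (-beta))" by (simp add: sum_distrib_right sum_negf)
    also have "\<dots> \<le> (\<Sum>i\<in>?V. p i * s i)"
    proof (rule sum_mono)
      fix i assume i: "i \<in> ?V"
      then have "p i \<ge> 0" "s i \<ge> - beta" using pn sV[OF i] by auto
      then show "p i * (- beta) \<le> p i * s i" by (rule mult_left_mono[rotated])
    qed
    also have "\<dots> \<le> eps * (- beta)" using le1 sumc by simp
    finally show ?thesis using True by simp
  next
    case False
    hence b0: "beta = 0" using b by simp
    have "(\<Sum>i\<in>?V. p i * s i) \<le> 0" using le1 sumc b0 by simp
    moreover have "\<forall>i\<in>?V. p i * s i \<ge> 0" using pn s0 by (simp add: mult_nonneg_nonneg)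
    moreover have "finite ?V" by simp
    moreover have "(\<Sum>i\<in>?V. p i * s i) \<ge> 0" using pn s0 by (intro sum_nonneg) (simp add: mult_nonneg_nonneg)
    ultimately have "(\<Sum>i\<in>?V. p i * s i) = 0" by linarith
    then have z: "\<forall>i\<in>?V. p i * s i = 0"
      using sum_nonneg_eq_0_iff[of ?V "\<lambda>i. p i * s i"] \<open>\<forall>i\<in>?V. p i * s i \<ge> 0\<close> \<open>finite ?V\<close> by blast
    have "\<forall>i\<in>?V. p i = 0"
    proof
      fix i assume i: "i \<in> ?V"
      then have "s i > 0" using sV b0 by force
      moreover have "p i * s i = 0" using z i by blast
      ultimately show "p i = 0" by simp
    qed
    then have "(\<Sum>i\<in>?V. p i) = 0" by simp
    then show ?thesis using eps by simp
  qed
  then show ?thesis unfolding cc_feasible_def using split xX by simp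
qed


theorem theorem1:
  fixes X :: "(real^'n) set" and c :: "real^'n" and eps :: real
    and N J :: nat and xi :: "nat \<Rightarrow> 'b" and p :: "nat \<Rightarrow> real"
    and gj :: "nat \<Rightarrow> real^'n \<Rightarrow> 'b \<Rightarrow> real" and xstar :: "real^'n"
  defines "g \<equiv> gmax J gj"
  assumes eps: "0 < eps" "eps < 1"
    and J: "J \<ge> 1"
    and p_nonneg: "\<forall>i\<in>{1..N}. p i \<ge> 0"
    and p_sum: "(\<Sum>i=1..N. p i) = 1"
    and xstar_feas: "cc_feasible X eps N xi p g xstar"
    and xstar_opt: "\<forall>x. cc_feasible X eps N xi p g x \<longrightarrow> c \<bullet> xstar \<le> c \<bullet> x"
    and Istar: "(\<Sum>i\<in>{i\<in>{1..N}. g xstar (xi i) < 0}. p i) > 1 - eps"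
  shows "ereal (c \<bullet> xstar) = v_cvar_S X c eps N xi p g \<and>
    (\<exists>alpha beta s. alpha_ok N alpha \<and> beta \<le> 0 \<and> (\<forall>i\<in>{1..N}. s i \<ge> 0) \<and>
       v_cvar_S X c eps N xi p g = v_cvar X c eps N xi p g alpha \<and>
       cvar_feasible X eps N xi p g alpha xstar beta s \<and>
       (\<forall>x beta' s' alpha'. alpha_ok N alpha' \<and> cvar_feasible X eps N xi p g alpha' x beta' s'
          \<longrightarrow> c \<bullet> xstar \<le> c \<bullet> x))"
proof -
  define I where "I = {i\<in>{1..N}. g xstar (xi i) < 0}"
  define Ic where "Ic = {1..N} - I"
  define G where "G = (\<Sum>i\<in>Ic. p i * g xstar (xi i))"
  define d where "d = eps - (\<Sum>i\<in>Ic. p i)"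
  define t where "t = G / d + 1"
  define alpha where "alpha = (\<lambda>i. if g xstar (xi i) < 0 then t / (- g xstar (xi i)) + 1 else 1)"
  define beta :: real where "beta = - t"
  define s where "s = (\<lambda>i. if g xstar (xi i) < 0 then 0 else g xstar (xi i) + t)"
  have fin: "finite I" "finite Ic" unfolding I_def Ic_def by auto
  have IIc: "I \<union> Ic = {1..N}" "I \<inter> Ic = {}" unfolding I_def Ic_def by auto
  have sumsplit: "\<And>f. (\<Sum>i=1..N. f i) = (\<Sum>i\<in>I. f i) + (\<Sum>i\<in>Ic. f i)"
    using sum.union_disjoint[OF fin IIc(2)] IIc(1) by metis
  have dpos: "d > 0" using Istar sumsplit[of p] p_sum unfolding d_def I_def by simp
  have G0: "G \<ge> 0" unfolding G_def Ic_def I_def using p_nonneg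
    by (intro sum_nonneg) auto
  have tpos: "t > 0" unfolding t_def using dpos G0 by (simp add: add_nonneg_pos)
  have td: "t * d = G + d" unfolding t_def using dpos by (simp add: field_simps)
  have aok: "alpha_ok N alpha" unfolding alpha_ok_def
  proof
    fix i assume "i \<in> {1..N}"
    show "1 \<le> alpha i"
    proof (cases "g xstar (xi i) < 0")
      case True
      then have "- g xstar (xi i) > 0" by simp
      then have "t / (- g xstar (xi i)) \<ge> 0" using tpos by (intro divide_nonneg_pos) simp_all
      then show ?thesis using True unfolding alpha_def by simp
    qed (simp add: alpha_def)
  qed
  have s0: "\<forall>i\<in>{1..N}. s i \<ge> 0" unfolding s_def using tpos by auto
  have con: "\<forall>i\<in>{1..N}. s i + beta \<ge> alpha i * g xstar (xi i)"
  proof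
    fix i assume "i \<in> {1..N}"
    show "s i + beta \<ge> alpha i * g xstar (xi i)"
    proof (cases "g xstar (xi i) < 0")
      case True
      then have "alpha i * g xstar (xi i) = - t + g xstar (xi i)"
        unfolding alpha_def by (simp add: field_simps)
      then show ?thesis using True unfolding s_def beta_def by simp
    qed (simp add: s_def alpha_def beta_def)
  qed
  have sI: "(\<Sum>i\<in>I. p i * s i) = 0" unfolding s_def I_def by simp
  have sIc: "(\<Sum>i\<in>Ic. p i * s i) = G + t * (\<Sum>i\<in>Ic. p i)"
  proof -
    have "(\<Sum>i\<in>Ic. p i * s i) = (\<Sum>i\<in>Ic. p i * g xstar (xi i) + t * p i)"
      by (rule sum.cong) (auto simp: s_def Ic_def I_def algebra_simps)
    then show ?thesis by (simp add: G_def sum.distrib sum_distrib_left)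
  qed
  have sumc: "eps * beta + (\<Sum>i=1..N. p i * s i) \<le> 0"
  proof -
    have "eps * beta + (\<Sum>i=1..N. p i * s i) = - eps * t + G + t * (\<Sum>i\<in>Ic. p i)"
      using sumsplit[of "\<lambda>i. p i * s i"] sI sIc unfolding beta_def by simp
    also have "\<dots> = G - t * d" unfolding d_def by (simp add: algebra_simps)
    also have "\<dots> \<le> 0" using td dpos by simp
    finally show ?thesis .
  qed
  have xX: "xstar \<in> X" using xstar_feas unfolding cc_feasible_def by simp
  have feas: "cvar_feasible X eps N xi p g alpha xstar beta s"
    unfolding cvar_feasible_def using xX tpos s0 sumc con by (simp add: beta_def)
  have opt: "\<forall>x beta' s' alpha'. alpha_ok N alpha' \<and> cvar_feasible X eps N xi p g alpha' x beta' s'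
          \<longrightarrow> c \<bullet> xstar \<le> c \<bullet> x"
    using cvar_imp_cc[OF _ _ eps(1) p_nonneg p_sum] xstar_opt by blast
  have lowa: "ereal (c \<bullet> xstar) \<le> v_cvar X c eps N xi p g a" if "alpha_ok N a" for a
    unfolding v_cvar_def
  proof (rule INF_greatest)
    fix z assume "z \<in> {(x, beta, s). cvar_feasible X eps N xi p g a x beta s}"
    then obtain x b s where z: "z = (x, b, s)" "cvar_feasible X eps N xi p g a x b s" by blast
    then have "c \<bullet> xstar \<le> c \<bullet> x" using opt that by blast
    then show "ereal (c \<bullet> xstar) \<le> (case z of (x, beta, s) \<Rightarrow> ereal (c \<bullet> x))" using z by simp
  qed
  have low: "ereal (c \<bullet> xstar) \<le> v_cvar_S X c eps N xi p g"
    unfolding v_cvar_S_def using lowa by (intro INF_greatest) auto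
  have up1: "v_cvar X c eps N xi p g alpha \<le> ereal (c \<bullet> xstar)"
    unfolding v_cvar_def using feas by (intro INF_lower2[of "(xstar, beta, s)"]) auto
  have up2: "v_cvar_S X c eps N xi p g \<le> v_cvar X c eps N xi p g alpha"
    unfolding v_cvar_S_def using aok by (intro INF_lower) auto
  have e1: "ereal (c \<bullet> xstar) = v_cvar_S X c eps N xi p g" using low up1 up2 by order
  have e2: "v_cvar_S X c eps N xi p g = v_cvar X c eps N xi p g alpha" using low up1 up2 by order
  have b0: "beta \<le> 0" using tpos beta_def by simp
  show ?thesis using e1 e2 aok feas opt s0 b0 by blast
qed
end
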